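(* Let $G$ be a connected finite simple undirected graph with at least two vertices and maximum degree $d_G$, and let $W:V_G\to\mathbb{R}$ satisfy $W(x)\le -d_G$ for all $x\in V_G$. Let $\psi$ be the ground state of $H_{G,W}$, chosen with $\psi(x)>0$ for all $x$ and $\sum_x \psi(x)^2=1$, let $E$ be the ground energy (smallest eigenvalue) of $H_{G,W}$, and let $\gamma$ be the gap between the smallest and second-smallest eigenvalues of $H_{G,W}$. Then $E<0$ and $$-\frac{1}{2E}\Phi_H^2 \le \gamma \le 2\Phi_H,$$ where $$\Phi_H=\min_{\emptyset\neq S\subsetneq V_G}\frac{F_S}{\min\{C_S,C_{\bar S}\}},\qquad F_S=\sum_{\substack{x\in S,\ y\notin S\\ x\sim y}}\psi(x)\psi(y),\qquad C_S=\sum_{x\in S}\psi(x)^2,\qquad C_{\bar S}=\sum_{x\notin S}\psi(x)^2,$$ and $x\sim y$ denotes adjacency in $G$.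
   Context: For a finite simple undirected graph $G$ with vertex set $V_G$, let $\mathcal{H}_G$ be the complex Hilbert space with orthonormal basis $\{|x\rangle : x\in V_G\}$. The graph Laplacian is $L_G=\sum_{x} d_x |x\rangle\langle x| - \sum_{x\sim y}|x\rangle\langle y|$, where $d_x$ is the degree of $x$ and the second sum runs over ordered pairs of adjacent vertices. For a potential $W:V_G\to\mathbb{R}$, $H_{G,W}=L_G+\sum_{x} W(x)|x\rangle\langle x|$. By the Perron–Frobenius theorem, for connected $G$ the ground state of $H_{G,W}$ is nondegenerate and can be chosen with all amplitudes strictly positive. *)

theory Defs
  imports Complex_Main
begin

definition simple_graph :: "'a set \<Rightarrow> ('a \<Rightarrow> 'a \<Rightarrow> bool) \<Rightarrow> bool" where
  "simple_graph V Adj \<longleftrightarrow> finite V \<and> (\<forall>x y. Adj x y \<longrightarrow> x \<in> V \<and> y \<in> V)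
     \<and> (\<forall>x y. Adj x y \<longrightarrow> Adj y x) \<and> (\<forall>x. \<not> Adj x x)"

definition connected_graph :: "'a set \<Rightarrow> ('a \<Rightarrow> 'a \<Rightarrow> bool) \<Rightarrow> bool" where
  "connected_graph V Adj \<longleftrightarrow> (\<forall>x\<in>V. \<forall>y\<in>V. Adj\<^sup>*\<^sup>* x y)"

definition deg :: "'a set \<Rightarrow> ('a \<Rightarrow> 'a \<Rightarrow> bool) \<Rightarrow> 'a \<Rightarrow> nat" where
  "deg V Adj x = card {y\<in>V. Adj x y}"

definition max_deg :: "'a set \<Rightarrow> ('a \<Rightarrow> 'a \<Rightarrow> bool) \<Rightarrow> nat" where
  "max_deg V Adj = Max (deg V Adj ` V)"

text \<open>The Schroedinger operator H = L + W acting on functions V \<rightarrow> 'b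
  (coefficients outside V are irrelevant).\<close>
definition Hop :: "'a set \<Rightarrow> ('a \<Rightarrow> 'a \<Rightarrow> bool) \<Rightarrow> ('a \<Rightarrow> real) \<Rightarrow> ('a \<Rightarrow> 'b::real_algebra_1) \<Rightarrow> 'a \<Rightarrow> 'b" where
  "Hop V Adj W f x = of_real (real (deg V Adj x) + W x) * f x - (\<Sum>y\<in>{y\<in>V. Adj x y}. f y)"

text \<open>Eigenvalues of H on the complex Hilbert space with basis V
  (H is Hermitian, so all eigenvalues are real).\<close>
definition eigvals :: "'a set \<Rightarrow> ('a \<Rightarrow> 'a \<Rightarrow> bool) \<Rightarrow> ('a \<Rightarrow> real) \<Rightarrow> real set" where
  "eigvals V Adj W = {lam. \<exists>f :: 'a \<Rightarrow> complex. (\<exists>x\<in>V. f x \<noteq> 0) \<and>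
       (\<forall>x\<in>V. Hop V Adj W f x = of_real lam * f x)}"

definition ground_energy :: "'a set \<Rightarrow> ('a \<Rightarrow> 'a \<Rightarrow> bool) \<Rightarrow> ('a \<Rightarrow> real) \<Rightarrow> real" where
  "ground_energy V Adj W = Min (eigvals V Adj W)"

text \<open>Second-smallest eigenvalue (the ground state is nondegenerate, so this is
  the next distinct eigenvalue above the ground energy).\<close>
definition spectral_gap :: "'a set \<Rightarrow> ('a \<Rightarrow> 'a \<Rightarrow> bool) \<Rightarrow> ('a \<Rightarrow> real) \<Rightarrow> real" where
  "spectral_gap V Adj W = Min (eigvals V Adj W - {ground_energy V Adj W}) - ground_energy V Adj W"

definition flow :: "'a set \<Rightarrow> ('a \<Rightarrow> 'a \<Rightarrow> bool) \<Rightarrow> ('a \<Rightarrow> real) \<Rightarrow> 'a set \<Rightarrow> real" where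
  "flow V Adj \<psi> S = (\<Sum>(x,y)\<in>{(x,y). x \<in> S \<and> y \<in> V - S \<and> Adj x y}. \<psi> x * \<psi> y)"

definition capacity :: "('a \<Rightarrow> real) \<Rightarrow> 'a set \<Rightarrow> real" where
  "capacity \<psi> S = (\<Sum>x\<in>S. (\<psi> x)\<^sup>2)"

definition Phi_H :: "'a set \<Rightarrow> ('a \<Rightarrow> 'a \<Rightarrow> bool) \<Rightarrow> ('a \<Rightarrow> real) \<Rightarrow> real" where
  "Phi_H V Adj \<psi> = Min ((\<lambda>S. flow V Adj \<psi> S / min (capacity \<psi> S) (capacity \<psi> (V - S)))
      ` {S. S \<noteq> {} \<and> S \<subset> V})"

end

theory Submission imports Defs "HOL-Analysis.Analysis" begin

locale gs =
  fixes V :: "'a set" and Adj :: "'a \<Rightarrow> 'a \<Rightarrow> bool" and W \<psi> :: "'a \<Rightarrow> real" and E :: real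
  assumes fin: "finite V"
    and adjV: "\<And>x y. Adj x y \<Longrightarrow> x \<in> V \<and> y \<in> V"
    and symA: "\<And>x y. Adj x y \<Longrightarrow> Adj y x"
    and irr: "\<And>x. \<not> Adj x x"
    and conn: "\<And>x y. x \<in> V \<Longrightarrow> y \<in> V \<Longrightarrow> Adj\<^sup>*\<^sup>* x y"
    and card2: "card V \<ge> 2"
    and Wle: "\<And>x. x \<in> V \<Longrightarrow> W x \<le> - real (max_deg V Adj)"
    and psi_pos: "\<And>x. x \<in> V \<Longrightarrow> \<psi> x > 0"
    and psi_norm: "(\<Sum>x\<in>V. (\<psi> x)\<^sup>2) = 1"
    and eig: "\<And>x. x \<in> V \<Longrightarrow> Hop V Adj W \<psi> x = E * \<psi> x"
begin

definition N :: "'a \<Rightarrow> 'a set" where "N x = {y\<in>V. Adj x y}"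
definition ip :: "('a \<Rightarrow> real) \<Rightarrow> ('a \<Rightarrow> real) \<Rightarrow> real" where
  "ip f g = (\<Sum>x\<in>V. f x * g x)"
definition Hr :: "('a \<Rightarrow> real) \<Rightarrow> 'a \<Rightarrow> real" where "Hr f = Hop V Adj W f"
definition A :: "('a \<Rightarrow> real) \<Rightarrow> 'a \<Rightarrow> real" where "A f x = Hr f x - E * f x"
definition u :: "('a \<Rightarrow> real) \<Rightarrow> 'a \<Rightarrow> real" where "u f x = f x / \<psi> x"
definition D :: "('a \<Rightarrow> real) \<Rightarrow> ('a \<Rightarrow> real) \<Rightarrow> real" where
  "D g f = (\<Sum>x\<in>V. \<Sum>y\<in>N x. \<psi> x * \<psi> y * (u g x - u g y) * (u f x - u f y))"

lemma finN[simp]: "finite (N x)" using fin by (simp add: N_def)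
lemma NV: "y \<in> N x \<Longrightarrow> y \<in> V" by (simp add: N_def)

lemma Hr_eq: "Hr f x = (real (deg V Adj x) + W x) * f x - (\<Sum>y\<in>N x. f y)"
  by (simp add: Hr_def Hop_def N_def)

lemma swap: "(\<Sum>x\<in>V. \<Sum>y\<in>N x. h x y) = (\<Sum>x\<in>V. \<Sum>y\<in>N x. h y x)"
proof -
  have "(\<Sum>x\<in>V. \<Sum>y\<in>N x. h x y) = (\<Sum>x\<in>V. \<Sum>y\<in>V. if Adj x y then h x y else 0)"
    unfolding N_def using fin by (simp add: sum.inter_filter)
  also have "\<dots> = (\<Sum>y\<in>V. \<Sum>x\<in>V. if Adj x y then h x y else 0)" by (rule sum.swap)
  also have "\<dots> = (\<Sum>y\<in>V. \<Sum>x\<in>V. if Adj y x then h x y else 0)"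
    by (intro sum.cong refl) (metis symA)
  also have "\<dots> = (\<Sum>x\<in>V. \<Sum>y\<in>N x. h y x)"
    unfolding N_def using fin by (simp add: sum.inter_filter)
  finally show ?thesis .
qed

lemma psi_sum: "x \<in> V \<Longrightarrow> (\<Sum>y\<in>N x. \<psi> y) = (real (deg V Adj x) + W x - E) * \<psi> x"
  using eig[of x] by (simp add: Hop_def N_def algebra_simps)

lemma A_u: assumes "x \<in> V" shows "A f x = (\<Sum>y\<in>N x. \<psi> y * (u f x - u f y))"
proof -
  have p: "\<psi> x > 0" using psi_pos assms by auto
  have "A f x = (real (deg V Adj x) + W x - E) * f x - (\<Sum>y\<in>N x. f y)"
    by (simp add: A_def Hr_eq algebra_simps)
  also have "(real (deg V Adj x) + W x - E) * f x = (\<Sum>y\<in>N x. \<psi> y) * u f x"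
  proof -
    have "(\<Sum>y\<in>N x. \<psi> y) * u f x = (real (deg V Adj x) + W x - E) * \<psi> x * (f x / \<psi> x)"
      using psi_sum[OF assms] by (simp add: u_def)
    also have "\<dots> = (real (deg V Adj x) + W x - E) * f x" using p by simp
    finally show ?thesis by simp
  qed
  also have "(\<Sum>y\<in>N x. f y) = (\<Sum>y\<in>N x. \<psi> y * u f y)"
    by (intro sum.cong refl) (use psi_pos NV in \<open>force simp: u_def\<close>)
  also have "(\<Sum>y\<in>N x. \<psi> y) * u f x - (\<Sum>y\<in>N x. \<psi> y * u f y) = (\<Sum>y\<in>N x. \<psi> y * (u f x - u f y))"
    by (simp add: sum_distrib_right sum_subtractf right_diff_distrib)
  finally show ?thesis .
qed

lemma u_mul: "x \<in> V \<Longrightarrow> g x = \<psi> x * u g x"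
  using psi_pos[of x] by (simp add: u_def)

lemma ip_A: "ip g (A f) = D g f / 2"
proof -
  define h where "h x y = \<psi> x * \<psi> y * u g x * (u f x - u f y)" for x y
  have "ip g (A f) = (\<Sum>x\<in>V. \<Sum>y\<in>N x. h x y)"
    unfolding ip_def h_def
    by (intro sum.cong refl) (simp add: A_u u_mul[of _ g] sum_distrib_left algebra_simps)
  moreover have "(\<Sum>x\<in>V. \<Sum>y\<in>N x. h x y) = (\<Sum>x\<in>V. \<Sum>y\<in>N x. h y x)" by (rule swap)
  moreover have "D g f = (\<Sum>x\<in>V. \<Sum>y\<in>N x. h x y) + (\<Sum>x\<in>V. \<Sum>y\<in>N x. h y x)"
    unfolding D_def h_def sum.distrib[symmetric] by (intro sum.cong refl) (simp add: algebra_simps)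
  ultimately show ?thesis by simp
qed

lemma D_sym: "D g f = D f g" unfolding D_def by (intro sum.cong refl) (simp add: algebra_simps)

lemma D_nonneg: "D f f \<ge> 0"
proof -
  have "0 \<le> \<psi> x * \<psi> y * (u f x - u f y) * (u f x - u f y)" if "x \<in> V" "y \<in> N x" for x y
  proof -
    have "0 \<le> \<psi> x * \<psi> y" using psi_pos NV that by (simp add: less_imp_le)
    then show ?thesis by (metis mult.assoc mult_nonneg_nonneg zero_le_square)
  qed
  then show ?thesis unfolding D_def by (intro sum_nonneg) auto
qed

end

context gs begin

lemma D_zero: assumes "D f f = 0" "x \<in> V" "y \<in> V" shows "u f x = u f y"
proof -
  have terms: "\<forall>x\<in>V. \<forall>y\<in>N x. \<psi> x * \<psi> y * (u f x - u f y) * (u f x - u f y) = 0"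
  proof -
    have nn: "0 \<le> \<psi> x * \<psi> y * (u f x - u f y) * (u f x - u f y)" if "x \<in> V" "y \<in> N x" for x y
    proof -
      have "0 \<le> \<psi> x * \<psi> y" using psi_pos NV that by (simp add: less_imp_le)
      then show ?thesis by (metis mult.assoc mult_nonneg_nonneg zero_le_square)
    qed
    define F where "F x = (\<Sum>y\<in>N x. \<psi> x * \<psi> y * (u f x - u f y) * (u f x - u f y))" for x
    have inn: "\<And>x. x\<in>V \<Longrightarrow> 0 \<le> F x"
      unfolding F_def using nn by (simp add: sum_nonneg)
    have "sum F V = 0" using assms(1) unfolding D_def F_def .
    then have "\<forall>x\<in>V. F x = 0" using sum_nonneg_eq_0_iff[of V F] fin inn by blast
    show ?thesis
    proof (intro ballI)
      fix x y assume x: "x \<in> V" and y: "y \<in> N x"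
      have "F x = 0" using \<open>\<forall>x\<in>V. F x = 0\<close> x by blast
      then have "\<forall>y\<in>N x. \<psi> x * \<psi> y * (u f x - u f y) * (u f x - u f y) = 0"
        unfolding F_def using sum_nonneg_eq_0_iff[OF finN[of x], where f="\<lambda>y. \<psi> x * \<psi> y * (u f x - u f y) * (u f x - u f y)"] nn[OF x] by blast
      then show "\<psi> x * \<psi> y * (u f x - u f y) * (u f x - u f y) = 0" using y by blast
    qed
  qed
  have edge: "u f a = u f b" if "Adj a b" for a b
  proof -
    have "a \<in> V" "b \<in> N a" using adjV[OF that] that by (auto simp: N_def)
    then have "\<psi> a * \<psi> b * (u f a - u f b) * (u f a - u f b) = 0" using terms by blast
    moreover have "\<psi> a * \<psi> b \<noteq> 0" using psi_pos[OF \<open>a \<in> V\<close>] psi_pos[OF NV[OF \<open>b \<in> N a\<close>]] by simp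
    ultimately show ?thesis by simp
  qed
  have "Adj\<^sup>*\<^sup>* x y" using conn assms by auto
  then show ?thesis
    by (induction rule: rtranclp_induct) (auto dest: edge)
qed

lemma exists_edge: "\<exists>x z. x \<in> V \<and> z \<in> N x"
proof -
  have "V \<noteq> {}" using card2 by auto
  then obtain x where x: "x \<in> V" by auto
  have "card (V - {x}) \<ge> 1" using card2 x fin by (simp add: card_Diff_singleton)
  then have "V - {x} \<noteq> {}" by (metis card.empty not_one_le_zero)
  then obtain y where "y \<in> V - {x}" by auto
  then have xy: "x \<in> V" "y \<in> V" "x \<noteq> y" using x by auto
  have "Adj\<^sup>*\<^sup>* x y" using conn xy by auto
  then obtain z where "Adj x z" using xy(3) by (metis converse_rtranclpE)
  then show ?thesis using adjV by (auto simp: N_def)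
qed

lemma deg_le: "x \<in> V \<Longrightarrow> real (deg V Adj x) + W x \<le> 0"
proof -
  assume x: "x \<in> V"
  have "deg V Adj x \<le> max_deg V Adj" unfolding max_deg_def using fin x by simp
  then show ?thesis using Wle[OF x] by linarith
qed

lemma E_neg: "E < 0"
proof -
  have "(\<Sum>x\<in>V. \<psi> x * Hr \<psi> x) = (\<Sum>x\<in>V. E * (\<psi> x)\<^sup>2)"
    by (intro sum.cong refl) (simp add: Hr_def eig power2_eq_square)
  also have "\<dots> = E" using psi_norm by (simp add: sum_distrib_left[symmetric])
  finally have e: "E = (\<Sum>x\<in>V. (real (deg V Adj x) + W x) * (\<psi> x)\<^sup>2) - (\<Sum>x\<in>V. \<Sum>y\<in>N x. \<psi> x * \<psi> y)"
    by (simp add: Hr_eq sum_subtractf right_diff_distrib sum_distrib_left power2_eq_square algebra_simps)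
  have "(\<Sum>x\<in>V. (real (deg V Adj x) + W x) * (\<psi> x)\<^sup>2) \<le> 0"
    by (intro sum_nonpos) (simp add: deg_le mult_nonpos_nonneg)
  moreover have "(\<Sum>x\<in>V. \<Sum>y\<in>N x. \<psi> x * \<psi> y) > 0"
  proof -
    obtain x z where xz: "x \<in> V" "z \<in> N x" using exists_edge by blast
    have pos: "0 < \<psi> a * \<psi> b" if "a \<in> V" "b \<in> N a" for a b using psi_pos that NV by simp
    have "(\<Sum>y\<in>N x. \<psi> x * \<psi> y) > 0"
      by (rule sum_pos2[OF finN xz(2)]) (use pos xz in \<open>auto intro: less_imp_le\<close>)
    moreover have "\<forall>i\<in>V. 0 \<le> (\<Sum>y\<in>N i. \<psi> i * \<psi> y)"
      by (auto intro!: sum_nonneg) (meson less_imp_le pos)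
    ultimately show ?thesis
      using sum_pos2[OF fin xz(1), of "\<lambda>x. \<Sum>y\<in>N x. \<psi> x * \<psi> y"] by blast
  qed
  ultimately show ?thesis using e by linarith
qed

definition SS where "SS = {S. S \<noteq> {} \<and> S \<subset> V}"
definition ratio where "ratio S = flow V Adj \<psi> S / min (capacity \<psi> S) (capacity \<psi> (V - S))"

lemma SS_fin: "finite SS"
proof -
  have "SS \<subseteq> Pow V" unfolding SS_def by auto
  then show ?thesis using fin finite_subset by blast
qed

lemma SS_ne: "SS \<noteq> {}"
proof -
  obtain x z where xz: "x \<in> V" "z \<in> N x" using exists_edge by blast
  have "z \<noteq> x" using xz irr by (auto simp: N_def)
  then have "{x} \<in> SS" using xz NV[OF xz(2)] by (auto simp: SS_def)
  then show ?thesis by auto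
qed

lemma Phi_eq: "Phi_H V Adj \<psi> = Min (ratio ` SS)" by (simp add: Phi_H_def ratio_def SS_def)

lemma Phi_le: "S \<in> SS \<Longrightarrow> Phi_H V Adj \<psi> \<le> ratio S"
  unfolding Phi_eq using SS_fin by simp

lemma Phi_ex: "\<exists>S\<in>SS. Phi_H V Adj \<psi> = ratio S"
proof -
  have "Min (ratio ` SS) \<in> ratio ` SS" using SS_fin SS_ne by (intro Min_in) auto
  then show ?thesis unfolding Phi_eq by auto
qed

lemma cap_pos: "S \<subseteq> V \<Longrightarrow> S \<noteq> {} \<Longrightarrow> capacity \<psi> S > 0"
proof -
  assume S: "S \<subseteq> V" "S \<noteq> {}"
  then obtain x where "x \<in> S" by auto
  moreover have "finite S" using S fin finite_subset by auto
  moreover have "\<forall>y\<in>S. (\<psi> y)\<^sup>2 > 0"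
  proof
    fix y assume "y \<in> S"
    then have "\<psi> y > 0" using S psi_pos by auto
    then show "(\<psi> y)\<^sup>2 > 0" by simp
  qed
  ultimately show ?thesis unfolding capacity_def
    using sum_pos2[of S x "\<lambda>y. (\<psi> y)\<^sup>2"] by (auto intro: less_imp_le)
qed

lemma cap_compl: "S \<subseteq> V \<Longrightarrow> capacity \<psi> (V - S) = 1 - capacity \<psi> S"
  unfolding capacity_def using psi_norm fin by (simp add: sum_diff finite_subset)

lemma flow_eq: assumes "S \<subseteq> V"
  shows "flow V Adj \<psi> S = (\<Sum>x\<in>V. \<Sum>y\<in>N x. if x \<in> S \<and> y \<notin> S then \<psi> x * \<psi> y else 0)"
proof -
  have fS: "finite S" using assms fin finite_subset by auto
  have set: "{(x,y). x \<in> S \<and> y \<in> V - S \<and> Adj x y} = Sigma S (\<lambda>x. {y\<in>N x. y \<notin> S})"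
    by (auto simp: N_def)
  have "flow V Adj \<psi> S = (\<Sum>x\<in>S. \<Sum>y\<in>{y\<in>N x. y \<notin> S}. \<psi> x * \<psi> y)"
    unfolding flow_def set using fS by (subst sum.Sigma) auto
  also have "\<dots> = (\<Sum>x\<in>S. \<Sum>y\<in>N x. if y \<notin> S then \<psi> x * \<psi> y else 0)"
    by (intro sum.cong[OF refl]) (rule sum.inter_filter[OF finN])
  also have "\<dots> = (\<Sum>x\<in>{x\<in>V. x \<in> S}. (\<Sum>y\<in>N x. if y \<notin> S then \<psi> x * \<psi> y else 0))"
  proof -
    have "{x\<in>V. x \<in> S} = S" using assms by auto
    then show ?thesis by simp
  qed
  also have "\<dots> = (\<Sum>x\<in>V. if x \<in> S then (\<Sum>y\<in>N x. if y \<notin> S then \<psi> x * \<psi> y else 0) else 0)"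
    using fin by (rule sum.inter_filter)
  also have "\<dots> = (\<Sum>x\<in>V. \<Sum>y\<in>N x. if x \<in> S \<and> y \<notin> S then \<psi> x * \<psi> y else 0)"
    by (intro sum.cong refl) auto
  finally show ?thesis .
qed

lemma flow_nonneg: "S \<subseteq> V \<Longrightarrow> flow V Adj \<psi> S \<ge> 0"
  by (simp add: flow_eq) (intro sum_nonneg, use psi_pos NV in \<open>auto intro: less_imp_le\<close>)

lemma SS_D: "S \<in> SS \<Longrightarrow> S \<subseteq> V \<and> S \<noteq> {} \<and> V - S \<noteq> {}"
  unfolding SS_def by auto

lemma ratio_nonneg: "S \<in> SS \<Longrightarrow> ratio S \<ge> 0"
  using SS_D[of S] cap_pos[of S] cap_pos[of "V - S"] flow_nonneg[of S]
  by (simp add: ratio_def)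

lemma Phi_nonneg: "Phi_H V Adj \<psi> \<ge> 0" using Phi_ex ratio_nonneg by auto

end

context gs begin

lemma u_lin: "u (\<lambda>x. a * f x + b * g x) x = a * u f x + b * u g x"
  by (simp add: u_def add_divide_distrib)

lemma D_lin: "D (\<lambda>x. a * f x + b * h x) g = a * D f g + b * D h g"
proof -
  have "a * D f g + b * D h g = (\<Sum>x\<in>V. \<Sum>y\<in>N x.
      a * (\<psi> x * \<psi> y * (u f x - u f y) * (u g x - u g y)) + b * (\<psi> x * \<psi> y * (u h x - u h y) * (u g x - u g y)))"
    unfolding D_def by (simp add: sum_distrib_left sum.distrib)
  also have "\<dots> = D (\<lambda>x. a * f x + b * h x) g"
    unfolding D_def u_lin by (intro sum.cong refl) (simp add: algebra_simps)
  finally show ?thesis ..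
qed

lemma ip_lin: "ip (\<lambda>x. a * f x + b * h x) g = a * ip f g + b * ip h g"
  unfolding ip_def by (simp add: sum_distrib_left sum.distrib algebra_simps)

lemma ip_sym: "ip f g = ip g f" unfolding ip_def by (simp add: mult.commute)

lemma D_add: "D (\<lambda>x. f x + t * h x) (\<lambda>x. f x + t * h x) = D f f + 2 * t * D f h + t\<^sup>2 * D h h"
proof -
  have e: "(\<lambda>x. f x + t * h x) = (\<lambda>x. 1 * f x + t * h x)" by simp
  have "D (\<lambda>x. f x + t * h x) (\<lambda>x. f x + t * h x) = D f (\<lambda>x. 1 * f x + t * h x) + t * D h (\<lambda>x. 1 * f x + t * h x)"
    by (subst e, subst D_lin) simp
  also have "D f (\<lambda>x. 1 * f x + t * h x) = D f f + t * D f h"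
    by (subst D_sym, subst D_lin) (simp add: D_sym)
  also have "D h (\<lambda>x. 1 * f x + t * h x) = D h f + t * D h h"
    by (subst D_sym, subst D_lin) (simp add: D_sym)
  finally show ?thesis by (simp add: D_sym[of h f] power2_eq_square algebra_simps)
qed

lemma ip_add: "ip (\<lambda>x. f x + t * h x) (\<lambda>x. f x + t * h x) = ip f f + 2 * t * ip f h + t\<^sup>2 * ip h h"
  unfolding ip_def by (simp add: sum_distrib_left sum.distrib power2_eq_square algebra_simps)

lemma D_scale: "D (\<lambda>x. c * f x) (\<lambda>x. c * f x) = c\<^sup>2 * D f f"
  using D_add[of "\<lambda>x. 0" c f] by (simp add: D_def u_def)

lemma ip_scale: "ip (\<lambda>x. c * f x) (\<lambda>x. c * f x) = c\<^sup>2 * ip f f"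
  unfolding ip_def by (simp add: sum_distrib_left power2_eq_square algebra_simps)

lemma quad0: fixes a b :: real assumes "\<forall>t. 0 \<le> t * a + t\<^sup>2 * b" shows "a = 0"
proof (rule ccontr)
  assume a: "a \<noteq> 0"
  define c where "c = \<bar>b\<bar> + 1"
  have c: "c > 0" by (simp add: c_def)
  define t where "t = - a / c"
  have "t * a + t\<^sup>2 * b \<le> t * a + t\<^sup>2 * \<bar>b\<bar>" by (simp add: mult_left_mono)
  also have "\<dots> = a\<^sup>2 * (\<bar>b\<bar> - c) / c\<^sup>2"
    unfolding t_def using c by (simp add: field_simps power2_eq_square)
  also have "\<dots> = - a\<^sup>2 / c\<^sup>2" by (simp add: c_def)
  also have "\<dots> < 0" using a c by simp
  finally show False using assms by (meson not_le)
qed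

lemma ip_self_nonneg: "ip f f \<ge> 0" unfolding ip_def by (simp add: sum_nonneg)

lemma ip_self_zero: "ip f f = 0 \<Longrightarrow> x \<in> V \<Longrightarrow> f x = 0"
  unfolding ip_def using sum_nonneg_eq_0_iff[OF fin, of "\<lambda>x. f x * f x"] by simp

lemma Dpsi: "D \<psi> f = 0"
proof -
  have "u \<psi> x = 1" if "x \<in> V" for x using psi_pos[OF that] by (simp add: u_def)
  then show ?thesis unfolding D_def using NV by (intro sum.neutral ballI) auto
qed

lemma Apsi: "x \<in> V \<Longrightarrow> A \<psi> x = 0" by (simp add: A_def Hr_def eig)

lemma psi_ip: "ip \<psi> \<psi> = 1" using psi_norm by (simp add: ip_def power2_eq_square)

definition adm where "adm h \<longleftrightarrow> (\<forall>x. x \<notin> V \<longrightarrow> h x = 0) \<and> ip h \<psi> = 0"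

lemma variational:
  assumes g: "adm g" "ip g g > 0"
  shows "\<exists>f m. (\<forall>x\<in>V. A f x = m * f x) \<and> (\<exists>x\<in>V. f x \<noteq> 0) \<and> m \<le> ip g (A g) / ip g g \<and> m > 0
     \<and> adm f"
proof -
  define B where "B x = (if x \<in> V then {-1..1} else {0::real})" for x
  define K where "K = PiE UNIV B \<inter> {f. ip f f = 1} \<inter> {f. ip f \<psi> = 0}"
  have cp [continuous_intros]: "continuous_on S (\<lambda>f::'a\<Rightarrow>real. f x)" for x S
    by (rule continuous_on_subset[OF continuous_on_product_coordinates]) simp
  have "compactin (product_topology (\<lambda>i. euclidean) UNIV) (PiE UNIV B)"
    by (subst compactin_PiE) (auto simp: B_def)
  then have cPi: "compact (PiE UNIV B)" by (simp add: euclidean_product_topology)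
  have cl1: "closed {f::'a\<Rightarrow>real. ip f f = 1}"
    by (rule closed_Collect_eq) (auto simp: ip_def intro!: continuous_intros)
  have cl2: "closed {f::'a\<Rightarrow>real. ip f \<psi> = 0}"
    by (rule closed_Collect_eq) (auto simp: ip_def intro!: continuous_intros)
  have cK: "compact K" unfolding K_def using cPi cl1 cl2 by (intro compact_Int_closed closed_Int) auto
  have inK: "(\<lambda>x. h x / sqrt (ip h h)) \<in> K" if h: "adm h" "ip h h > 0" for h
  proof -
    define c where "c = sqrt (ip h h)"
    have c: "c > 0" "c\<^sup>2 = ip h h" using h by (auto simp: c_def)
    have e: "(\<lambda>x. h x / c) = (\<lambda>x. (1/c) * h x)" by simp
    have n: "ip (\<lambda>x. h x / c) (\<lambda>x. h x / c) = 1"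
      unfolding e ip_scale using c h(2) by (simp add: power_divide)
    have o: "ip (\<lambda>x. h x / c) \<psi> = 0" using h unfolding adm_def ip_def
      by (simp add: sum_divide_distrib[symmetric])
    have b: "(h x / c) \<in> B x" for x
    proof (cases "x \<in> V")
      case True
      have "(h x / c) * (h x / c) \<le> ip (\<lambda>x. h x / c) (\<lambda>x. h x / c)"
        unfolding ip_def by (rule member_le_sum) (use True fin in auto)
      then have "(h x / c)\<^sup>2 \<le> 1\<^sup>2" using n by (simp add: power2_eq_square)
      then have "\<bar>h x / c\<bar> \<le> 1" using abs_le_square_iff[of "h x / c" 1] by simp
      then show ?thesis using True unfolding B_def by (simp only: if_True atLeastAtMost_iff abs_le_iff) (simp; linarith)
    next
      case False then show ?thesis using h by (simp add: B_def adm_def)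
    qed
    show ?thesis unfolding K_def c_def[symmetric] using n o b by (auto simp: PiE_iff)
  qed
  have "K \<noteq> {}" using inK[OF g] by auto
  moreover have "continuous_on K (\<lambda>f. ip f (A f))"
    unfolding ip_def A_def Hr_def Hop_def by (intro continuous_intros)
  ultimately obtain f0 where f0: "f0 \<in> K" and fmin: "\<And>f. f \<in> K \<Longrightarrow> ip f0 (A f0) \<le> ip f (A f)"
    using continuous_attains_inf[OF cK] by blast
  define m where "m = ip f0 (A f0)"
  have f0n: "ip f0 f0 = 1" and f0o: "ip f0 \<psi> = 0" and f0s: "\<And>x. x \<notin> V \<Longrightarrow> f0 x = 0"
    using f0 by (auto simp: K_def B_def PiE_iff split: if_splits)
  have adm0: "adm f0" using f0o f0s by (simp add: adm_def)
  have key: "m * ip h h \<le> ip h (A h)" if h: "adm h" for h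
  proof (cases "ip h h = 0")
    case True then show ?thesis using ip_A[of h h] D_nonneg[of h] by simp
  next
    case False
    then have pos: "ip h h > 0" using ip_self_nonneg[of h] by linarith
    define c where "c = sqrt (ip h h)"
    have c: "c > 0" "c\<^sup>2 = ip h h" using pos by (auto simp: c_def)
    have e: "(\<lambda>x. h x / c) = (\<lambda>x. (1/c) * h x)" by simp
    have "m \<le> ip (\<lambda>x. h x / c) (A (\<lambda>x. h x / c))" unfolding m_def
      using fmin[OF inK[OF h pos]] by (simp add: c_def)
    also have "\<dots> = (1/c)\<^sup>2 * ip h (A h)" unfolding ip_A e D_scale by simp
    finally have "m \<le> ip h (A h) / c\<^sup>2" by (simp add: power_divide)
    then show ?thesis using pos c by (simp add: pos_le_divide_eq)
  qed
  have lag: "D f0 h = 2 * m * ip f0 h" if h: "adm h" for h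
  proof -
    have "\<forall>t. 0 \<le> t * (D f0 h - 2 * m * ip f0 h) + t\<^sup>2 * (D h h / 2 - m * ip h h)"
    proof
      fix t
      have "adm (\<lambda>x. f0 x + t * h x)" using h adm0 unfolding adm_def
        using ip_lin[of 1 f0 t h \<psi>] by simp
      from key[OF this] have "m * (ip f0 f0 + 2 * t * ip f0 h + t\<^sup>2 * ip h h)
          \<le> (D f0 f0 + 2 * t * D f0 h + t\<^sup>2 * D h h) / 2"
        unfolding ip_A D_add ip_add .
      moreover have "D f0 f0 = 2 * m" using ip_A[of f0 f0] by (simp add: m_def)
      ultimately show "0 \<le> t * (D f0 h - 2 * m * ip f0 h) + t\<^sup>2 * (D h h / 2 - m * ip h h)"
        using f0n by (simp add: algebra_simps)
    qed
    then show ?thesis using quad0 by fastforce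
  qed
  define r where "r x = (if x \<in> V then A f0 x - m * f0 x else 0)" for x
  have "ip \<psi> (A f0) = 0" using ip_A[of \<psi> f0] Dpsi by simp
  then have radm: "adm r" unfolding adm_def r_def using f0o
    by (auto simp: ip_def sum_subtractf algebra_simps if_distrib cong: sum.cong) (simp add: sum_distrib_left[symmetric])
  have "ip r (A f0) = D r f0 / 2" by (rule ip_A)
  also have "\<dots> = m * ip f0 r" using lag[OF radm] D_sym[of r f0] by simp
  finally have "ip r (\<lambda>x. 1 * A f0 x + (-m) * f0 x) = 0"
    using ip_lin[of 1 "A f0" "-m" f0 r] by (simp add: ip_sym)
  then have "ip r r = 0" unfolding ip_def r_def by (simp cong: sum.cong)
  then have eigf: "\<forall>x\<in>V. A f0 x = m * f0 x" using ip_self_zero[of r] by (auto simp: r_def)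
  have nz: "\<exists>x\<in>V. f0 x \<noteq> 0"
  proof (rule ccontr)
    assume "\<not> ?thesis"
    then have "ip f0 f0 = 0" unfolding ip_def by simp
    then show False using f0n by simp
  qed
  have mpos: "m > 0"
  proof -
    have "m \<ge> 0" using ip_A[of f0 f0] D_nonneg[of f0] by (simp add: m_def)
    moreover have "m \<noteq> 0"
    proof
      assume "m = 0"
      then have D0: "D f0 f0 = 0" using ip_A[of f0 f0] by (simp add: m_def)
      obtain x0 where x0: "x0 \<in> V" using nz by blast
      define c where "c = u f0 x0"
      have fc: "f0 x = c * \<psi> x" if "x \<in> V" for x
        using D_zero[OF D0 that x0] psi_pos[OF that] by (simp add: c_def u_def field_simps)
      have "ip f0 \<psi> = c * ip \<psi> \<psi>" unfolding ip_def by (simp add: fc sum_distrib_left algebra_simps cong: sum.cong)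
      then have "c = 0" using f0o psi_ip by simp
      then show False using nz fc by auto
    qed
    ultimately show ?thesis by simp
  qed
  have "m * ip g g \<le> ip g (A g)" by (rule key[OF g(1)])
  then have "m \<le> ip g (A g) / ip g g" using g(2) by (simp add: field_simps)
  then show ?thesis using eigf nz mpos adm0 by blast
qed

end

context gs begin

lemma Hop_Re: "Hop V Adj W (\<lambda>x. Re (f x)) x = Re (Hop V Adj W f x)"
  by (simp add: Hop_def)

lemma Hop_Im: "Hop V Adj W (\<lambda>x. Im (f x)) x = Im (Hop V Adj W f x)"
  by (simp add: Hop_def)

lemma Hop_of_real: "Hop V Adj W (\<lambda>x. complex_of_real (f x)) x = complex_of_real (Hop V Adj W f x)"
  by (simp add: Hop_def)

lemma real_eig:
  assumes "lam \<in> eigvals V Adj W"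
  shows "\<exists>f. (\<exists>x\<in>V. f x \<noteq> 0) \<and> (\<forall>x\<in>V. Hr f x = lam * f x)"
proof -
  obtain g :: "'a \<Rightarrow> complex" where g: "\<exists>x\<in>V. g x \<noteq> 0" "\<forall>x\<in>V. Hop V Adj W g x = of_real lam * g x"
    using assms unfolding eigvals_def by blast
  have re: "\<forall>x\<in>V. Hr (\<lambda>x. Re (g x)) x = lam * Re (g x)"
    using g(2) by (simp add: Hr_def Hop_Re)
  have im: "\<forall>x\<in>V. Hr (\<lambda>x. Im (g x)) x = lam * Im (g x)"
    using g(2) by (simp add: Hr_def Hop_Im)
  show ?thesis
  proof (cases "\<exists>x\<in>V. Re (g x) \<noteq> 0")
    case True then show ?thesis using re by (intro exI[of _ "\<lambda>x. Re (g x)"]) auto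
  next
    case False
    obtain x where x: "x \<in> V" "g x \<noteq> 0" using g(1) by blast
    then have "Re (g x) = 0" using False by blast
    then have "Im (g x) \<noteq> 0" using x(2) complex_eqI[of "g x" 0] by auto
    then have "\<exists>x\<in>V. Im (g x) \<noteq> 0" using x(1) by blast
    then show ?thesis using im by (intro exI[of _ "\<lambda>x. Im (g x)"]) auto
  qed
qed

lemma complex_eig:
  assumes "\<exists>x\<in>V. f x \<noteq> 0" "\<forall>x\<in>V. Hr f x = lam * f x"
  shows "lam \<in> eigvals V Adj W"
  unfolding eigvals_def
  by (rule CollectI, rule exI[of _ "\<lambda>x. complex_of_real (f x)"]) (use assms in \<open>auto simp: Hop_of_real Hr_def\<close>)

lemma Hr_scale: "Hr (\<lambda>x. c * f x) x = c * Hr f x"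
  by (simp add: Hr_eq sum_distrib_left algebra_simps)

lemma ip_Hr: "ip g (Hr f) = ip g (A f) + E * ip g f"
  unfolding ip_def A_def by (simp add: right_diff_distrib sum_subtractf sum_distrib_left mult.left_commute)

lemma Hr_sym: "ip g (Hr f) = ip f (Hr g)"
  unfolding ip_Hr ip_A by (simp add: D_sym ip_sym)

lemma ip_pos: "\<exists>x\<in>V. f x \<noteq> 0 \<Longrightarrow> ip f f > 0"
proof -
  assume "\<exists>x\<in>V. f x \<noteq> 0"
  then obtain x where x: "x \<in> V" "f x \<noteq> 0" by blast
  show ?thesis unfolding ip_def
  proof -
    have "0 < (f x)\<^sup>2" using x(2) by simp
    then have "0 < f x * f x" by (simp add: power2_eq_square)
    then show "0 < (\<Sum>x\<in>V. f x * f x)" using sum_pos2[OF fin x(1), of "\<lambda>x. f x * f x"] by auto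
  qed
qed

lemma norm_eig:
  assumes "lam \<in> eigvals V Adj W"
  shows "\<exists>e. ip e e = 1 \<and> (\<forall>x\<in>V. Hr e x = lam * e x)"
proof -
  obtain f where f: "\<exists>x\<in>V. f x \<noteq> 0" "\<forall>x\<in>V. Hr f x = lam * f x" using real_eig[OF assms] by blast
  define c where "c = 1 / sqrt (ip f f)"
  have p: "ip f f > 0" using ip_pos[OF f(1)] .
  have "ip (\<lambda>x. c * f x) (\<lambda>x. c * f x) = 1" unfolding ip_scale c_def using p by (simp add: power_divide)
  moreover have "\<forall>x\<in>V. Hr (\<lambda>x. c * f x) x = lam * (c * f x)" using f(2) by (simp add: Hr_scale)
  ultimately show ?thesis by blast
qed

lemma orth_eig:
  assumes "\<forall>x\<in>V. Hr e x = lam * e x" "\<forall>x\<in>V. Hr e' x = mu * e' x" "lam \<noteq> mu"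
  shows "ip e e' = 0"
proof -
  have a: "ip e (Hr e') = mu * ip e e'" unfolding ip_def using assms(2)
    by (simp add: sum_distrib_left algebra_simps)
  have b: "ip e' (Hr e) = lam * ip e' e" unfolding ip_def using assms(1)
    by (simp add: sum_distrib_left algebra_simps)
  have "mu * ip e e' = ip e (Hr e')" using a by simp
  also have "\<dots> = ip e' (Hr e)" by (rule Hr_sym)
  also have "\<dots> = lam * ip e' e" by (rule b)
  also have "\<dots> = lam * ip e e'" using ip_sym[of e' e] by simp
  finally have "(mu - lam) * ip e e' = 0" by (simp add: left_diff_distrib)
  moreover have "mu - lam \<noteq> 0" using assms(3) by simp
  ultimately show ?thesis by simp
qed

lemma bessel:
  assumes fL: "finite L" and on: "\<And>l. l \<in> L \<Longrightarrow> ip (e l) (e l) = 1"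
    and og: "\<And>l l'. l \<in> L \<Longrightarrow> l' \<in> L \<Longrightarrow> l \<noteq> l' \<Longrightarrow> ip (e l) (e l') = 0"
    and x0: "x0 \<in> V"
  shows "(\<Sum>l\<in>L. (e l x0)\<^sup>2) \<le> 1"
proof -
  define c where "c l = e l x0" for l
  define d where "d x = (if x = x0 then 1 else (0::real))" for x
  define s where "s x = (\<Sum>l\<in>L. c l * e l x)" for x
  have ipll: "ip (e l) (e l') = (if l = l' then 1 else 0)" if "l \<in> L" "l' \<in> L" for l l'
    using on og that by auto
  have "0 \<le> (\<Sum>x\<in>V. (d x - s x)\<^sup>2)" by (simp add: sum_nonneg)
  also have "\<dots> = (\<Sum>x\<in>V. d x * d x - 2 * (d x * s x) + s x * s x)"
    by (intro sum.cong refl) (simp add: power2_eq_square algebra_simps)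
  also have "\<dots> = (\<Sum>x\<in>V. d x * d x) - 2 * (\<Sum>x\<in>V. d x * s x) + (\<Sum>x\<in>V. s x * s x)"
    by (simp only: sum.distrib sum_subtractf sum_distrib_left)
  also have "(\<Sum>x\<in>V. d x * d x) = 1"
  proof -
    have "(\<Sum>x\<in>V. d x * d x) = (\<Sum>x\<in>V. if x = x0 then 1 else 0)" by (intro sum.cong refl) (simp add: d_def)
    then show ?thesis using x0 fin by (simp add: sum.delta)
  qed
  also have "(\<Sum>x\<in>V. d x * s x) = s x0"
  proof -
    have "(\<Sum>x\<in>V. d x * s x) = (\<Sum>x\<in>V. if x = x0 then s x else 0)" by (intro sum.cong refl) (simp add: d_def)
    then show ?thesis using x0 fin by (simp add: sum.delta)
  qed
  also have "s x0 = (\<Sum>l\<in>L. (e l x0)\<^sup>2)" by (simp add: s_def c_def power2_eq_square)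
  also have "(\<Sum>x\<in>V. s x * s x) = (\<Sum>x\<in>V. \<Sum>l\<in>L. \<Sum>l'\<in>L. c l * c l' * (e l x * e l' x))"
    unfolding s_def sum_product by (simp add: algebra_simps)
  also have "\<dots> = (\<Sum>l\<in>L. \<Sum>x\<in>V. \<Sum>l'\<in>L. c l * c l' * (e l x * e l' x))" by (rule sum.swap)
  also have "\<dots> = (\<Sum>l\<in>L. \<Sum>l'\<in>L. \<Sum>x\<in>V. c l * c l' * (e l x * e l' x))"
    by (intro sum.cong refl) (rule sum.swap)
  also have "\<dots> = (\<Sum>l\<in>L. \<Sum>l'\<in>L. c l * c l' * ip (e l) (e l'))"
    by (simp add: ip_def sum_distrib_left)
  also have "\<dots> = (\<Sum>l\<in>L. c l * c l)"
  proof (intro sum.cong refl)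
    fix l assume l: "l \<in> L"
    have "(\<Sum>l'\<in>L. c l * c l' * ip (e l) (e l')) = (\<Sum>l'\<in>L. if l = l' then c l * c l' else 0)"
      by (intro sum.cong refl) (simp add: ipll l)
    also have "\<dots> = c l * c l" using l fL by (simp add: sum.delta)
    finally show "(\<Sum>l'\<in>L. c l * c l' * ip (e l) (e l')) = c l * c l" .
  qed
  also have "\<dots> = (\<Sum>l\<in>L. (e l x0)\<^sup>2)" by (simp add: c_def power2_eq_square)
  finally show ?thesis by simp
qed

lemma card_eig: assumes "finite L" "L \<subseteq> eigvals V Adj W" shows "card L \<le> card V"
proof -
  have "\<forall>l\<in>L. \<exists>e. ip e e = 1 \<and> (\<forall>x\<in>V. Hr e x = l * e x)" using norm_eig assms(2) by blast
  then obtain e where e0: "\<forall>l\<in>L. ip (e l) (e l) = 1 \<and> (\<forall>x\<in>V. Hr (e l) x = l * e l x)"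
    by (rule bchoice[elim_format]) blast
  then have e: "\<And>l. l \<in> L \<Longrightarrow> ip (e l) (e l) = 1 \<and> (\<forall>x\<in>V. Hr (e l) x = l * e l x)" by blast
  have og: "ip (e l) (e l') = 0" if "l \<in> L" "l' \<in> L" "l \<noteq> l'" for l l'
    using orth_eig[of "e l" l "e l'" l'] e that by blast
  have "real (card L) = (\<Sum>l\<in>L. ip (e l) (e l))" using e by simp
  also have "\<dots> = (\<Sum>x\<in>V. \<Sum>l\<in>L. (e l x)\<^sup>2)" unfolding ip_def
    by (subst sum.swap) (simp add: power2_eq_square)
  also have "\<dots> \<le> (\<Sum>x\<in>V. 1)"
    by (intro sum_mono bessel[OF assms(1)]) (use e og in auto)
  finally show ?thesis by simp
qed

lemma eig_finite: "finite (eigvals V Adj W)"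
proof (rule ccontr)
  assume "infinite (eigvals V Adj W)"
  then obtain L where "finite L" "card L = Suc (card V)" "L \<subseteq> eigvals V Adj W"
    using infinite_arbitrarily_large by blast
  then show False using card_eig by fastforce
qed

end


lemma ind_int: fixes a b :: real
  shows "integrable lborel (indicator {a..<b} :: real \<Rightarrow> real)"
    and "integral\<^sup>L lborel (indicator {a..<b} :: real \<Rightarrow> real) = max (b - a) 0"
proof -
  show "integrable lborel (indicator {a..<b} :: real \<Rightarrow> real)"
  proof (cases "a \<le> b")
    case True then show ?thesis by (simp add: integrable_indicator_iff)
  next
    case False then have "{a..<b} = {}" by auto
    then show ?thesis by simp
  qed
  show "integral\<^sup>L lborel (indicator {a..<b} :: real \<Rightarrow> real) = max (b - a) 0"
  proof (cases "a \<le> b")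
    case True then show ?thesis by simp
  next
    case False then have "{a..<b} = {}" by auto
    then show ?thesis using False by simp
  qed
qed

lemma amgm: fixes a b t :: real assumes "t > 0" shows "\<bar>a\<bar> * b \<le> t / 2 * a\<^sup>2 + b\<^sup>2 / (2 * t)"
proof -
  have "0 \<le> (t * \<bar>a\<bar> - \<bar>b\<bar>)\<^sup>2" by simp
  then have "2 * t * (\<bar>a\<bar> * \<bar>b\<bar>) \<le> t\<^sup>2 * a\<^sup>2 + b\<^sup>2"
    by (simp add: power2_eq_square algebra_simps)
  then have "\<bar>a\<bar> * \<bar>b\<bar> \<le> (t\<^sup>2 * a\<^sup>2 + b\<^sup>2) / (2 * t)" using assms by (simp add: field_simps)
  also have "\<dots> = t / 2 * a\<^sup>2 + b\<^sup>2 / (2 * t)" using assms by (simp add: field_simps power2_eq_square)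
  finally show ?thesis by (smt (verit) abs_ge_self mult_left_mono abs_ge_zero)
qed

context gs begin

lemma ip_A_expand: "ip g (A f) = (\<Sum>x\<in>V. \<Sum>y\<in>N x. \<psi> x * \<psi> y * u g x * (u f x - u f y))"
  unfolding ip_def
  by (intro sum.cong refl) (simp add: A_u u_mul[of _ g] sum_distrib_left algebra_simps)

lemma cheeger_core:
  assumes eigf: "\<forall>x\<in>V. A f x = mu * f x"
    and pos: "\<exists>x\<in>V. f x > 0" and neg: "\<exists>x\<in>V. f x < 0"
    and half: "capacity \<psi> {x\<in>V. f x > 0} \<le> 1/2"
  shows "(Phi_H V Adj \<psi>)\<^sup>2 \<le> 2 * (- E) * mu"
proof -
  define g where "g x = max (f x) 0" for x
  define v where "v = u g"
  define s where "s x = (v x)\<^sup>2" for x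
  define w where "w x y = \<psi> x * \<psi> y" for x y
  define N0 where "N0 = ip g g"
  define P where "P = {x\<in>V. f x > 0}"
  define Phi where "Phi = Phi_H V Adj \<psi>"
  have wpos: "w x y > 0" if "x \<in> V" "y \<in> N x" for x y using psi_pos that NV by (simp add: w_def)
  have vnn: "v x \<ge> 0" if "x \<in> V" for x using psi_pos[OF that] by (simp add: v_def u_def g_def)
  have vg: "v x = max (u f x) 0" if "x \<in> V" for x
    using psi_pos[OF that] by (simp add: v_def u_def g_def max_divide_distrib_right)
  have N0pos: "N0 > 0"
  proof -
    obtain x where x: "x \<in> V" "f x > 0" using pos by blast
    have "g x \<noteq> 0" using x(2) by (simp add: g_def)
    then have "\<exists>x\<in>V. g x \<noteq> 0" using x(1) by blast
    then show ?thesis unfolding N0_def by (rule ip_pos)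
  qed
  have N0s: "N0 = (\<Sum>x\<in>V. (\<psi> x)\<^sup>2 * s x)"
    unfolding N0_def ip_def s_def v_def
    by (intro sum.cong refl) (simp add: u_def power2_eq_square psi_pos less_imp_neq[symmetric] field_simps)
  define X where "X = D g g"
  have X0: "X \<ge> 0" unfolding X_def by (rule D_nonneg)
  have step1: "X \<le> 2 * mu * N0"
  proof -
    have "ip g (A f) = mu * N0"
    proof -
      have "ip g (A f) = (\<Sum>x\<in>V. mu * (g x * g x))"
        unfolding ip_def using eigf by (intro sum.cong refl) (auto simp: g_def max_def)
      then show ?thesis by (simp add: N0_def ip_def sum_distrib_left)
    qed
    moreover have "ip g (A g) \<le> ip g (A f)"
      unfolding ip_A_expand
    proof (intro sum_mono)
      fix x y assume x: "x \<in> V" and y: "y \<in> N x"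
      have yV: "y \<in> V" using NV[OF y] .
      have "u g x * (u g x - u g y) \<le> u g x * (u f x - u f y)"
        using vg[OF x] vg[OF yV] unfolding v_def by (auto simp: max_def mult_left_mono)
      then have "(\<psi> x * \<psi> y) * (u g x * (u g x - u g y)) \<le> (\<psi> x * \<psi> y) * (u g x * (u f x - u f y))"
        by (rule mult_left_mono[OF _ less_imp_le[OF wpos[OF x y, unfolded w_def]]])
      then show "\<psi> x * \<psi> y * u g x * (u g x - u g y) \<le> \<psi> x * \<psi> y * u g x * (u f x - u f y)"
        by (simp add: mult.assoc)
    qed
    ultimately show ?thesis using ip_A[of g g] by (simp add: X_def)
  qed
  define T where "T = (\<Sum>x\<in>V. \<Sum>y\<in>N x. w x y * max (s x - s y) 0)"
  have step2: "Phi * N0 \<le> T"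
  proof -
    define f1 where "f1 t = (\<Sum>x\<in>V. \<Sum>y\<in>N x. w x y * indicator {s y..<s x} t)" for t :: real
    define f2 where "f2 t = (\<Sum>x\<in>V. (\<psi> x)\<^sup>2 * indicator {0..<s x} t)" for t :: real
    have i1: "integrable lborel f1" unfolding f1_def
      by (intro Bochner_Integration.integrable_sum integrable_mult_right ind_int)
    have i2: "integrable lborel f2" unfolding f2_def
      by (intro Bochner_Integration.integrable_sum integrable_mult_right ind_int)
    have I1: "integral\<^sup>L lborel f1 = T"
      unfolding f1_def T_def
      apply (subst Bochner_Integration.integral_sum)
       apply (intro Bochner_Integration.integrable_sum integrable_mult_right ind_int)
      apply (intro sum.cong refl)
      apply (subst Bochner_Integration.integral_sum)
       apply (intro Bochner_Integration.integrable_sum integrable_mult_right ind_int)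
      apply (intro sum.cong refl)
      apply (simp only: Bochner_Integration.integral_mult_right_zero ind_int(2))
      done
    have I2: "integral\<^sup>L lborel f2 = N0"
      unfolding f2_def N0s
      apply (subst Bochner_Integration.integral_sum)
       apply (intro Bochner_Integration.integrable_sum integrable_mult_right ind_int)
      apply (intro sum.cong refl)
      apply (simp only: Bochner_Integration.integral_mult_right_zero ind_int(2))
      apply (simp add: s_def)
      done
    have pw: "Phi * f2 t \<le> f1 t" for t
    proof (cases "t < 0")
      case True
      then have "f2 t = 0" by (simp add: f2_def indicator_def)
      moreover have "f1 t \<ge> 0" unfolding f1_def
        by (intro sum_nonneg) (auto simp: less_imp_le wpos)
      ultimately show ?thesis by simp
    next
      case False
      define L where "L = {x\<in>V. t < s x}"
      have LV: "L \<subseteq> V" by (auto simp: L_def)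
      have f2L: "f2 t = capacity \<psi> L"
      proof -
        have "f2 t = (\<Sum>x\<in>V. if t < s x then (\<psi> x)\<^sup>2 else 0)"
          unfolding f2_def using False by (intro sum.cong refl) (simp add: indicator_def)
        also have "\<dots> = capacity \<psi> L" unfolding capacity_def L_def
          using fin by (simp add: sum.inter_filter)
        finally show ?thesis .
      qed
      have f1L: "f1 t = flow V Adj \<psi> L"
        unfolding flow_eq[OF LV] f1_def
      proof (intro sum.cong refl)
        fix x y assume "x \<in> V" "y \<in> N x"
        then show "w x y * indicator {s y..<s x} t = (if x \<in> L \<and> y \<notin> L then \<psi> x * \<psi> y else 0)"
          using NV by (auto simp: L_def w_def indicator_def)
      qed
      show ?thesis
      proof (cases "L = {}")
        case True
        then have "f2 t = 0" using f2L by (simp add: capacity_def)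
        moreover have "f1 t \<ge> 0" unfolding f1L by (rule flow_nonneg[OF LV])
        ultimately show ?thesis by simp
      next
        case Lne: False
        have LP: "L \<subseteq> P"
        proof
          fix x assume "x \<in> L"
          then have x: "x \<in> V" "t < s x" by (auto simp: L_def)
          then have "s x > 0" using False by simp
          then have "v x \<noteq> 0" by (auto simp: s_def)
          then have "u f x > 0" using vg[OF x(1)] by (auto simp: max_def split: if_splits)
          then show "x \<in> P" using psi_pos[OF x(1)] x by (simp add: P_def u_def zero_less_divide_iff)
        qed
        obtain z where z: "z \<in> V" "f z < 0" using neg by blast
        have "z \<notin> L"
        proof -
          have "u f z < 0" using z psi_pos[OF z(1)] by (simp add: u_def divide_neg_pos)
          then have "s z = 0" using vg[OF z(1)] by (simp add: s_def)
          then show ?thesis using False by (simp add: L_def)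
        qed
        then have "L \<in> SS" using Lne LV z by (auto simp: SS_def)
        then have ph: "Phi \<le> ratio L" unfolding Phi_def by (rule Phi_le)
        have cL: "capacity \<psi> L > 0" using cap_pos[OF LV Lne] .
        have cLP: "capacity \<psi> L \<le> capacity \<psi> P" unfolding capacity_def
          using LP fin by (intro sum_mono2) (auto simp: P_def)
        have "min (capacity \<psi> L) (capacity \<psi> (V - L)) = capacity \<psi> L"
          using cap_compl[OF LV] cLP half by (simp add: P_def)
        then have "Phi \<le> flow V Adj \<psi> L / capacity \<psi> L" using ph by (simp add: ratio_def)
        then have "Phi * capacity \<psi> L \<le> flow V Adj \<psi> L" using cL by (simp add: pos_le_divide_eq)
        then show ?thesis using f1L f2L by simp
      qed
    qed
    have "integral\<^sup>L lborel (\<lambda>t. Phi * f2 t) \<le> integral\<^sup>L lborel f1"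
      by (rule integral_mono) (use i1 i2 pw in auto)
    then show ?thesis using I1 I2 by simp
  qed
  define Y where "Y = (\<Sum>x\<in>V. \<Sum>y\<in>N x. w x y * (v x + v y)\<^sup>2)"
  have XD: "X = (\<Sum>x\<in>V. \<Sum>y\<in>N x. w x y * (v x - v y)\<^sup>2)"
    unfolding X_def D_def v_def w_def by (simp add: power2_eq_square algebra_simps)
  have twoT: "2 * T = (\<Sum>x\<in>V. \<Sum>y\<in>N x. w x y * \<bar>s x - s y\<bar>)"
  proof -
    have "T = (\<Sum>x\<in>V. \<Sum>y\<in>N x. w y x * max (s y - s x) 0)" unfolding T_def by (rule swap)
    also have "\<dots> = (\<Sum>x\<in>V. \<Sum>y\<in>N x. w x y * max (s y - s x) 0)" by (simp add: w_def mult.commute)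
    finally have "2 * T = (\<Sum>x\<in>V. \<Sum>y\<in>N x. w x y * max (s x - s y) 0 + w x y * max (s y - s x) 0)"
      unfolding T_def by (simp add: sum.distrib)
    also have "\<dots> = (\<Sum>x\<in>V. \<Sum>y\<in>N x. w x y * \<bar>s x - s y\<bar>)"
      by (intro sum.cong refl) (simp add: max_def abs_if algebra_simps)
    finally show ?thesis .
  qed
  have step3: "2 * T \<le> t / 2 * X + Y / (2 * t)" if t: "t > 0" for t
  proof -
    have "2 * T \<le> (\<Sum>x\<in>V. \<Sum>y\<in>N x. t / 2 * (w x y * (v x - v y)\<^sup>2) + (w x y * (v x + v y)\<^sup>2) / (2 * t))"
      unfolding twoT
    proof (intro sum_mono)
      fix x y assume x: "x \<in> V" and y: "y \<in> N x"
      have yV: "y \<in> V" using NV[OF y] .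
      have e1: "s x - s y = (v x - v y) * (v x + v y)" by (simp add: s_def power2_eq_square algebra_simps)
      have "\<bar>s x - s y\<bar> = \<bar>v x - v y\<bar> * \<bar>v x + v y\<bar>" by (simp only: e1 abs_mult)
      also have "\<bar>v x + v y\<bar> = v x + v y" using vnn[OF x] vnn[OF yV] by simp
      finally have "\<bar>s x - s y\<bar> = \<bar>v x - v y\<bar> * (v x + v y)" .
      also have "\<dots> \<le> t / 2 * (v x - v y)\<^sup>2 + (v x + v y)\<^sup>2 / (2 * t)" by (rule amgm[OF t])
      finally have "w x y * \<bar>s x - s y\<bar> \<le> w x y * (t / 2 * (v x - v y)\<^sup>2 + (v x + v y)\<^sup>2 / (2 * t))"
        using wpos[OF x y] by (simp add: mult_left_mono)
      then show "w x y * \<bar>s x - s y\<bar> \<le> t / 2 * (w x y * (v x - v y)\<^sup>2) + w x y * (v x + v y)\<^sup>2 / (2 * t)"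
        by (simp add: algebra_simps)
    qed
    also have "\<dots> = t / 2 * X + Y / (2 * t)"
      unfolding XD Y_def by (simp add: sum.distrib sum_distrib_left sum_divide_distrib)
    finally show ?thesis .
  qed
  have step4: "Y \<le> 4 * (- E) * N0"
  proof -
    have "Y \<le> (\<Sum>x\<in>V. \<Sum>y\<in>N x. 2 * (w x y * (v x)\<^sup>2) + 2 * (w y x * (v y)\<^sup>2))"
      unfolding Y_def
    proof (intro sum_mono)
      fix x y assume x: "x \<in> V" and y: "y \<in> N x"
      have "(v x + v y)\<^sup>2 \<le> 2 * (v x)\<^sup>2 + 2 * (v y)\<^sup>2"
        using sum_squares_ge_zero[of "v x - v y" 0] by (simp add: power2_eq_square algebra_simps)
      then have "w x y * (v x + v y)\<^sup>2 \<le> w x y * (2 * (v x)\<^sup>2 + 2 * (v y)\<^sup>2)"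
        using wpos[OF x y] by (simp add: mult_left_mono)
      then show "w x y * (v x + v y)\<^sup>2 \<le> 2 * (w x y * (v x)\<^sup>2) + 2 * (w y x * (v y)\<^sup>2)"
        by (simp add: w_def algebra_simps)
    qed
    also have "\<dots> = 2 * (\<Sum>x\<in>V. \<Sum>y\<in>N x. w x y * (v x)\<^sup>2) + 2 * (\<Sum>x\<in>V. \<Sum>y\<in>N x. w y x * (v y)\<^sup>2)"
      by (simp add: sum.distrib sum_distrib_left)
    also have "(\<Sum>x\<in>V. \<Sum>y\<in>N x. w y x * (v y)\<^sup>2) = (\<Sum>x\<in>V. \<Sum>y\<in>N x. w x y * (v x)\<^sup>2)"
      by (rule swap[symmetric])
    also have "(\<Sum>x\<in>V. \<Sum>y\<in>N x. w x y * (v x)\<^sup>2) = (\<Sum>x\<in>V. (real (deg V Adj x) + W x - E) * (g x)\<^sup>2)"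
    proof (intro sum.cong refl)
      fix x assume x: "x \<in> V"
      have "(\<Sum>y\<in>N x. w x y * (v x)\<^sup>2) = (\<Sum>y\<in>N x. \<psi> y) * (\<psi> x * (v x)\<^sup>2)"
        unfolding w_def sum_distrib_right by (intro sum.cong refl) (simp add: mult_ac)
      also have "\<dots> = (real (deg V Adj x) + W x - E) * (\<psi> x * v x)\<^sup>2"
        by (simp add: psi_sum[OF x] power2_eq_square mult_ac)
      also have "\<psi> x * v x = g x" using u_mul[OF x, of g] by (simp add: v_def)
      finally show "(\<Sum>y\<in>N x. w x y * (v x)\<^sup>2) = (real (deg V Adj x) + W x - E) * (g x)\<^sup>2" .
    qed
    also have "(\<Sum>x\<in>V. (real (deg V Adj x) + W x - E) * (g x)\<^sup>2) \<le> (\<Sum>x\<in>V. (- E) * (g x)\<^sup>2)"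
      by (intro sum_mono mult_right_mono) (auto simp: deg_le)
    also have "\<dots> = (- E) * N0" by (simp add: N0_def ip_def sum_distrib_left power2_eq_square)
    finally show ?thesis by simp
  qed
  have En: "- E > 0" using E_neg by simp
  have Phi0: "Phi \<ge> 0" unfolding Phi_def by (rule Phi_nonneg)
  have Y0: "Y \<ge> 0" unfolding Y_def
  proof (intro sum_nonneg)
    fix x y assume "x \<in> V" "y \<in> N x"
    then show "0 \<le> w x y * (v x + v y)\<^sup>2" using wpos by (simp add: less_imp_le)
  qed
  have mu0: "mu \<ge> 0"
  proof -
    have "0 \<le> mu * N0" using step1 X0 by simp
    then show ?thesis using N0pos by (simp add: zero_le_mult_iff)
  qed
  show ?thesis
  proof (cases "Phi = 0")
    case True then show ?thesis using mu0 En unfolding Phi_def by (simp add: mult_nonpos_nonneg)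
  next
    case False
    then have Pp: "Phi > 0" using Phi0 by simp
    have mup: "mu > 0"
    proof (rule ccontr)
      assume "\<not> mu > 0"
      then have "mu = 0" using mu0 by simp
      then have "X = 0" using step1 X0 by simp
      define t where "t = (Y + 1) / (Phi * N0)"
      have tp: "t > 0" using Pp N0pos Y0 by (simp add: t_def)
      have "2 * (Phi * N0) \<le> Y / (2 * t)" using step2 step3[OF tp] \<open>X = 0\<close> by simp
      also have "Y / (2 * t) = Y * (Phi * N0) / (2 * (Y + 1))" unfolding t_def
        using Pp N0pos Y0 by (simp add: field_simps)
      also have "\<dots> < Phi * N0"
      proof -
        have "Y * (Phi * N0) < 2 * (Y + 1) * (Phi * N0)" using Pp N0pos Y0
          by (intro mult_strict_right_mono) auto
        then show ?thesis using Y0 by (simp add: divide_less_eq mult.commute)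
      qed
      finally show False using Pp N0pos by simp
    qed
    define t where "t = Phi / mu"
    have tp: "t > 0" using Pp mup by (simp add: t_def)
    have "2 * (Phi * N0) \<le> t / 2 * X + Y / (2 * t)" using step2 step3[OF tp] by simp
    also have "t / 2 * X \<le> t / 2 * (2 * mu * N0)" using step1 tp by (simp add: mult_left_mono)
    also have "t / 2 * (2 * mu * N0) = Phi * N0" using mup by (simp add: t_def)
    also have "Y / (2 * t) \<le> 4 * (- E) * N0 / (2 * t)" by (rule divide_right_mono[OF step4]) (use tp in simp)
    also have "4 * (- E) * N0 / (2 * t) = 2 * (- E) * mu * N0 / Phi" using Pp mup by (simp add: t_def field_simps)
    finally have "Phi * N0 \<le> 2 * (- E) * mu * N0 / Phi" by (simp add: mult.commute)
    then have "Phi * Phi * N0 \<le> 2 * (- E) * mu * N0" using Pp by (simp add: field_simps)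
    then have "Phi * Phi \<le> 2 * (- E) * mu" by (rule mult_right_le_imp_le[OF _ N0pos])
    then show ?thesis unfolding Phi_def[symmetric] by (simp add: power2_eq_square)
  qed
qed

end

context gs begin

lemma split_V: "S \<subseteq> V \<Longrightarrow> (\<Sum>x\<in>V. h x) = (\<Sum>x\<in>S. h x) + (\<Sum>x\<in>V - S. h x)"
  using sum.subset_diff[of S V h] fin by (simp add: add.commute)

lemma upper: "\<exists>lam\<in>eigvals V Adj W - {E}. lam - E \<le> 2 * Phi_H V Adj \<psi>"
proof -
  obtain S where S: "S \<in> SS" and PhiS: "Phi_H V Adj \<psi> = ratio S" using Phi_ex by blast
  have SV: "S \<subseteq> V" "S \<noteq> {}" "V - S \<noteq> {}" using SS_D[OF S] by auto
  define a where "a = capacity \<psi> S"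
  define b where "b = capacity \<psi> (V - S)"
  have a: "a > 0" using cap_pos[OF SV(1,2)] by (simp add: a_def)
  have b: "b > 0" using cap_pos[of "V - S"] SV(3) by (simp add: b_def)
  define K where "K = 1 / a + 1 / b"
  define g where "g x = (if x \<in> S then \<psi> x / a else if x \<in> V then - \<psi> x / b else 0)" for x
  have ug: "u g x = (if x \<in> S then 1 / a else - 1 / b)" if "x \<in> V" for x
    using psi_pos[OF that] that by (simp add: g_def u_def)
  have sS: "(\<Sum>x\<in>S. (\<psi> x)\<^sup>2) = a" by (simp add: a_def capacity_def)
  have sC: "(\<Sum>x\<in>V - S. (\<psi> x)\<^sup>2) = b" by (simp add: b_def capacity_def)
  have g1: "(\<Sum>x\<in>S. g x * \<psi> x) = (\<Sum>x\<in>S. (\<psi> x)\<^sup>2 / a)"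
    by (intro sum.cong refl) (simp add: g_def power2_eq_square)
  have g2: "(\<Sum>x\<in>V - S. g x * \<psi> x) = (\<Sum>x\<in>V - S. - ((\<psi> x)\<^sup>2 / b))"
    by (intro sum.cong refl) (simp add: g_def power2_eq_square)
  have "ip g \<psi> = (\<Sum>x\<in>S. (\<psi> x)\<^sup>2 / a) - (\<Sum>x\<in>V - S. (\<psi> x)\<^sup>2 / b)"
    unfolding ip_def split_V[OF SV(1)] g1 g2 by (simp add: sum_negf)
  also have "\<dots> = 0" using a b by (simp add: sum_divide_distrib[symmetric] sS sC)
  finally have gpsi: "ip g \<psi> = 0" .
  have admg: "adm g" using gpsi SV(1) by (auto simp: adm_def g_def)
  have g3: "(\<Sum>x\<in>S. g x * g x) = (\<Sum>x\<in>S. (\<psi> x)\<^sup>2 / a\<^sup>2)"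
    by (intro sum.cong refl) (simp add: g_def power2_eq_square)
  have g4: "(\<Sum>x\<in>V - S. g x * g x) = (\<Sum>x\<in>V - S. (\<psi> x)\<^sup>2 / b\<^sup>2)"
    by (intro sum.cong refl) (simp add: g_def power2_eq_square)
  have "ip g g = (\<Sum>x\<in>S. (\<psi> x)\<^sup>2 / a\<^sup>2) + (\<Sum>x\<in>V - S. (\<psi> x)\<^sup>2 / b\<^sup>2)"
    unfolding ip_def split_V[OF SV(1)] g3 g4 ..
  also have "\<dots> = a / a\<^sup>2 + b / b\<^sup>2" by (simp only: sum_divide_distrib[symmetric] sS sC)
  also have "\<dots> = K" using a b by (simp add: K_def power2_eq_square)
  finally have gg: "ip g g = K" .
  have Kpos: "K > 0" using a b unfolding K_def by (intro add_pos_pos) auto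
  have "D g g = (\<Sum>x\<in>V. \<Sum>y\<in>N x. K\<^sup>2 * ((if x \<in> S \<and> y \<notin> S then \<psi> x * \<psi> y else 0)
                + (if y \<in> S \<and> x \<notin> S then \<psi> y * \<psi> x else 0)))"
    unfolding D_def
  proof (intro sum.cong refl)
    fix x y assume x: "x \<in> V" and y: "y \<in> N x"
    have yV: "y \<in> V" using NV[OF y] .
    show "\<psi> x * \<psi> y * (u g x - u g y) * (u g x - u g y) =
        K\<^sup>2 * ((if x \<in> S \<and> y \<notin> S then \<psi> x * \<psi> y else 0) + (if y \<in> S \<and> x \<notin> S then \<psi> y * \<psi> x else 0))"
      unfolding ug[OF x] ug[OF yV] K_def by (auto simp: power2_eq_square algebra_simps)
  qed
  also have "\<dots> = K\<^sup>2 * ((\<Sum>x\<in>V. \<Sum>y\<in>N x. if x \<in> S \<and> y \<notin> S then \<psi> x * \<psi> y else 0)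
           + (\<Sum>x\<in>V. \<Sum>y\<in>N x. if y \<in> S \<and> x \<notin> S then \<psi> y * \<psi> x else 0))"
    by (simp only: distrib_left sum_distrib_left sum.distrib)
  also have "(\<Sum>x\<in>V. \<Sum>y\<in>N x. if y \<in> S \<and> x \<notin> S then \<psi> y * \<psi> x else 0)
      = (\<Sum>x\<in>V. \<Sum>y\<in>N x. if x \<in> S \<and> y \<notin> S then \<psi> x * \<psi> y else 0)"
    by (rule swap[symmetric])
  also have "(\<Sum>x\<in>V. \<Sum>y\<in>N x. if x \<in> S \<and> y \<notin> S then \<psi> x * \<psi> y else 0) = flow V Adj \<psi> S"
    by (rule flow_eq[OF SV(1), symmetric])
  finally have Dg: "D g g = 2 * K\<^sup>2 * flow V Adj \<psi> S" by simp
  have "ip g (A g) / ip g g = K * flow V Adj \<psi> S"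
    unfolding ip_A Dg gg using Kpos by (simp add: power2_eq_square)
  also have "\<dots> \<le> 2 * ratio S"
  proof -
    have F0: "flow V Adj \<psi> S \<ge> 0" by (rule flow_nonneg[OF SV(1)])
    have mn: "min a b > 0" using a b by simp
    have "1 / a \<le> 1 / min a b" using mn a by (intro divide_left_mono) auto
    moreover have "1 / b \<le> 1 / min a b" using mn b by (intro divide_left_mono) auto
    ultimately have "K \<le> 2 / min a b" unfolding K_def by simp
    then have "K * flow V Adj \<psi> S \<le> 2 / min a b * flow V Adj \<psi> S" using F0 by (rule mult_right_mono)
    also have "\<dots> = 2 * ratio S" by (simp add: ratio_def a_def b_def)
    finally show ?thesis .
  qed
  finally have Rg: "ip g (A g) / ip g g \<le> 2 * Phi_H V Adj \<psi>" using PhiS by simp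
  obtain f m where fm: "\<forall>x\<in>V. A f x = m * f x" "\<exists>x\<in>V. f x \<noteq> 0" "m \<le> ip g (A g) / ip g g" "m > 0"
    using variational[OF admg] gg Kpos by blast
  have "\<forall>x\<in>V. Hr f x = (E + m) * f x" using fm(1) by (simp add: A_def algebra_simps)
  then have "E + m \<in> eigvals V Adj W" using complex_eig fm(2) by blast
  moreover have "E + m \<noteq> E" using fm(4) by simp
  ultimately show ?thesis using fm(3) Rg by (intro bexI[of _ "E + m"]) auto
qed

lemma A_neg: "A (\<lambda>x. - f x) x = - A f x"
  by (simp add: A_def Hr_eq sum_negf algebra_simps)

lemma lower: assumes lam: "lam \<in> eigvals V Adj W - {E}"
  shows "(Phi_H V Adj \<psi>)\<^sup>2 \<le> 2 * (- E) * (lam - E)"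
proof -
  obtain f where f: "\<exists>x\<in>V. f x \<noteq> 0" "\<forall>x\<in>V. Hr f x = lam * f x" using real_eig lam by blast
  define mu where "mu = lam - E"
  have mu0: "mu \<noteq> 0" using lam by (simp add: mu_def)
  have eigf: "\<forall>x\<in>V. A f x = mu * f x" using f(2) by (simp add: A_def mu_def algebra_simps)
  have "mu * ip \<psi> f = ip \<psi> (A f)" unfolding ip_def using eigf by (simp add: sum_distrib_left algebra_simps)
  also have "\<dots> = 0" using ip_A[of \<psi> f] Dpsi by simp
  finally have orth: "(\<Sum>x\<in>V. \<psi> x * f x) = 0" using mu0 by (simp add: ip_def)
  have posex: "\<exists>x\<in>V. f x > 0"
  proof (rule ccontr)
    assume "\<not> ?thesis"
    then have np: "\<forall>x\<in>V. \<psi> x * f x \<le> 0" using psi_pos by (auto simp: mult_nonneg_nonpos less_imp_le not_less)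
    then have nn: "\<And>x. x \<in> V \<Longrightarrow> 0 \<le> - (\<psi> x * f x)" by simp
    have "(\<Sum>x\<in>V. - (\<psi> x * f x)) = 0" using orth by (simp add: sum_negf)
    then have "\<forall>x\<in>V. \<psi> x * f x = 0" using sum_nonneg_eq_0_iff[OF fin, of "\<lambda>x. - (\<psi> x * f x)"] nn by simp
    then show False using f(1) psi_pos by force
  qed
  have negex: "\<exists>x\<in>V. f x < 0"
  proof (rule ccontr)
    assume "\<not> ?thesis"
    then have np: "\<forall>x\<in>V. \<psi> x * f x \<ge> 0" using psi_pos by (auto simp: less_imp_le not_less)
    then have nn: "\<And>x. x \<in> V \<Longrightarrow> 0 \<le> \<psi> x * f x" by blast
    have "\<forall>x\<in>V. \<psi> x * f x = 0" using sum_nonneg_eq_0_iff[OF fin, of "\<lambda>x. \<psi> x * f x"] orth nn by simp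
    then show False using f(1) psi_pos by force
  qed
  define P where "P = {x\<in>V. f x > 0}"
  define Q where "Q = {x\<in>V. f x < 0}"
  have "capacity \<psi> P + capacity \<psi> Q = capacity \<psi> (P \<union> Q)"
    unfolding capacity_def by (rule sum.union_disjoint[symmetric]) (auto simp: P_def Q_def intro: finite_subset[OF _ fin])
  also have "\<dots> \<le> capacity \<psi> V" unfolding capacity_def
    by (rule sum_mono2[OF fin]) (auto simp: P_def Q_def)
  also have "capacity \<psi> V = 1" using psi_norm by (simp add: capacity_def)
  finally have cPQ: "capacity \<psi> P + capacity \<psi> Q \<le> 1" .
  show ?thesis
  proof (cases "capacity \<psi> P \<le> 1/2")
    case True
    then show ?thesis using cheeger_core[OF eigf posex negex] by (simp add: P_def mu_def)
  next
    case False
    then have cQ: "capacity \<psi> Q \<le> 1/2" using cPQ by simp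
    have e2: "\<forall>x\<in>V. A (\<lambda>x. - f x) x = mu * (- f x)" using eigf by (simp add: A_neg)
    have "{x\<in>V. - f x > 0} = Q" by (auto simp: Q_def)
    then show ?thesis using cheeger_core[OF e2] negex posex cQ by (simp add: mu_def)
  qed
qed

lemma main: "E < 0 \<and> - (1 / (2 * E)) * (Phi_H V Adj \<psi>)\<^sup>2 \<le> Min (eigvals V Adj W - {E}) - E
    \<and> Min (eigvals V Adj W - {E}) - E \<le> 2 * Phi_H V Adj \<psi>"
proof -
  have En: "E < 0" by (rule E_neg)
  have finE: "finite (eigvals V Adj W - {E})" using eig_finite by simp
  obtain lam where lam: "lam \<in> eigvals V Adj W - {E}" "lam - E \<le> 2 * Phi_H V Adj \<psi>" using upper by blast
  have ne: "eigvals V Adj W - {E} \<noteq> {}" using lam by auto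
  have mle: "Min (eigvals V Adj W - {E}) \<le> lam" using finE lam(1) by simp
  have min_in: "Min (eigvals V Adj W - {E}) \<in> eigvals V Adj W - {E}" using finE ne by (rule Min_in)
  have lo: "(Phi_H V Adj \<psi>)\<^sup>2 \<le> 2 * (- E) * (Min (eigvals V Adj W - {E}) - E)" by (rule lower[OF min_in])
  have "- (1 / (2 * E)) * (Phi_H V Adj \<psi>)\<^sup>2 = (Phi_H V Adj \<psi>)\<^sup>2 / (2 * (- E))" by simp
  also have "\<dots> \<le> Min (eigvals V Adj W - {E}) - E" using lo En by (subst pos_divide_le_eq) (auto simp: mult.commute)
  finally show ?thesis using En mle lam(2) by simp
qed

end

theorem proposition3:
  fixes V :: "'a set" and Adj :: "'a \<Rightarrow> 'a \<Rightarrow> bool" and W \<psi> :: "'a \<Rightarrow> real"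
  assumes "simple_graph V Adj" and "connected_graph V Adj" and "card V \<ge> 2"
    and "\<forall>x\<in>V. W x \<le> - real (max_deg V Adj)"
    and "\<forall>x\<in>V. \<psi> x > 0" and "(\<Sum>x\<in>V. (\<psi> x)\<^sup>2) = 1"
    and "\<forall>x\<in>V. Hop V Adj W \<psi> x = ground_energy V Adj W * \<psi> x"
  shows "ground_energy V Adj W < 0
    \<and> - (1 / (2 * ground_energy V Adj W)) * (Phi_H V Adj \<psi>)\<^sup>2 \<le> spectral_gap V Adj W
    \<and> spectral_gap V Adj W \<le> 2 * Phi_H V Adj \<psi>"
proof -
  interpret gs V Adj W \<psi> "ground_energy V Adj W"
    using assms unfolding simple_graph_def connected_graph_def by unfold_locales auto
  show ?thesis using main unfolding spectral_gap_def .
qed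


end
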